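(* For every $g\in{}^\flat\widetilde L_+^\downarrow$ one has $g^*=g\tau$, where $*$ is the complex conjugation of $(\widetilde L_+^\uparrow)^{\mathbb C}\cong L_+(\mathbb C)^\wedge$.
   Context: $M$ is a real vector space of dimension $d\ge3$ with Lorentzian inner product $\eta$; $L_+^\uparrow$ the identity component of the Lorentz group, $L_+^\downarrow$ the determinant-one time-orientation-reversing component. $L_+(\mathbb C)$ is the group of complex determinant-one isometries of $(M^{\mathbb C},\eta^{\mathbb C})$; $\pi\colon L_+(\mathbb C)^\wedge\to L_+(\mathbb C)$ its universal cover, a double cover, with $\pi^{-1}(1)=\{1,\tau\}$. $\widetilde L_+^\uparrow=\pi^{-1}(L_+^\uparrow)$, ${}^\flat\widetilde L_+^\downarrow=\pi^{-1}(L_+^\downarrow)$. The inclusion $\widetilde L_+^\uparrow\subset L_+(\mathbb C)^\wedge$ identifies $L_+(\mathbb C)^\wedge$ with the complexification $(\widetilde L_+^\uparrow)^{\mathbb C}$. For a connected Lie group $G$, complex conjugation $*_G$ on $G^{\mathbb C}$ is the (anti-holomorphic) automorphism whose derivative at the identity is the complex conjugation $a+ib\mapsto a-ib$ of $\mathrm{Lie}(G^{\mathbb C})=\mathrm{Lie}(G)\otimes\mathbb C$. *)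

theory Defs
  imports Complex_Main "Jordan_Normal_Form.Determinant"
begin

text \<open>M = R^d with standard basis e_0,...,e_(d-1) and
  Lorentzian form eta = diag(1,-1,...,-1).  The universal (double) cover
  of L_+(C) = SO(d,C) is realised as the complex spin group inside the
  complex Clifford algebra Cl(M^C, eta^C).  Clifford algebra elements are
  coefficient functions on basis blades e_A, A a subset of {0..<d}.\<close>

definition eta_diag :: "nat \<Rightarrow> complex" where
  "eta_diag i = (if i = 0 then 1 else -1)"

definition blade_sign :: "nat set \<Rightarrow> nat set \<Rightarrow> complex" where
  "blade_sign A B =
     (-1) ^ card {(a, b). a \<in> A \<and> b \<in> B \<and> b < a} * (\<Prod>c\<in>A \<inter> B. eta_diag c)"

definition cl_elem :: "nat \<Rightarrow> (nat set \<Rightarrow> complex) \<Rightarrow> bool" where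
  "cl_elem d x \<longleftrightarrow> (\<forall>A. \<not> A \<subseteq> {..<d} \<longrightarrow> x A = 0)"

text \<open>Clifford product: e_A e_B = blade_sign A B e_(A symmetric-difference B).\<close>
definition cl_mult :: "nat \<Rightarrow> (nat set \<Rightarrow> complex) \<Rightarrow> (nat set \<Rightarrow> complex) \<Rightarrow> (nat set \<Rightarrow> complex)" where
  "cl_mult d x y = (\<lambda>C. \<Sum>A\<in>Pow {..<d}. blade_sign A (A - C \<union> (C - A)) * x A * y (A - C \<union> (C - A)))"

definition cl_one :: "nat set \<Rightarrow> complex" where
  "cl_one = (\<lambda>A. if A = {} then 1 else 0)"

definition cl_vec :: "nat \<Rightarrow> (nat \<Rightarrow> complex) \<Rightarrow> (nat set \<Rightarrow> complex)" where
  "cl_vec d v = (\<lambda>A. if \<exists>i<d. A = {i} then v (the_elem A) else 0)"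

definition cl_basis :: "nat \<Rightarrow> nat \<Rightarrow> (nat set \<Rightarrow> complex)" where
  "cl_basis d j = cl_vec d (\<lambda>i. if i = j then 1 else 0)"

definition cl_even :: "(nat set \<Rightarrow> complex) \<Rightarrow> bool" where
  "cl_even x \<longleftrightarrow> (\<forall>A. odd (card A) \<longrightarrow> x A = 0)"

definition cl_rev :: "(nat set \<Rightarrow> complex) \<Rightarrow> (nat set \<Rightarrow> complex)" where
  "cl_rev x = (\<lambda>A. (-1) ^ (card A * (card A - 1) div 2) * x A)"

definition spin_group :: "nat \<Rightarrow> (nat set \<Rightarrow> complex) set" where
  "spin_group d = {x. cl_elem d x \<and> cl_even x
      \<and> cl_mult d x (cl_rev x) = cl_one \<and> cl_mult d (cl_rev x) x = cl_one
      \<and> (\<forall>v. \<exists>w. cl_mult d (cl_mult d x (cl_vec d v)) (cl_rev x) = cl_vec d w)}"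

text \<open>The covering map pi : Spin(d,C) -> L_+(C), as a complex d x d matrix:
  column j is the image x e_j x^(-1) of the basis vector e_j.\<close>
definition spin_pi :: "nat \<Rightarrow> (nat set \<Rightarrow> complex) \<Rightarrow> complex mat" where
  "spin_pi d x = mat d d (\<lambda>(i, j).
      cl_mult d (cl_mult d x (cl_basis d j)) (cl_rev x) {i})"

definition spin_tau :: "nat set \<Rightarrow> complex" where
  "spin_tau = (\<lambda>A. if A = {} then -1 else 0)"

text \<open>Complex conjugation of (tilde L_+^up)^C = Spin(d,C) with respect to the real
  form: coefficientwise conjugation in the real basis blades.  It is an
  anti-holomorphic automorphism fixing the real spin group, whose derivative at 1
  is the conjugation a + ib -> a - ib of Lie(tilde L_+^up) (x) C.\<close>
definition spin_conj :: "(nat set \<Rightarrow> complex) \<Rightarrow> (nat set \<Rightarrow> complex)" where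
  "spin_conj x = (\<lambda>A. cnj (x A))"

definition eta_mat :: "nat \<Rightarrow> real mat" where
  "eta_mat d = mat d d (\<lambda>(i, j). if i = j then (if i = 0 then 1 else -1) else 0)"

definition eta_form :: "nat \<Rightarrow> real vec \<Rightarrow> real vec \<Rightarrow> real" where
  "eta_form d x y = x \<bullet> (eta_mat d *\<^sub>v y)"

definition future_timelike :: "nat \<Rightarrow> real vec \<Rightarrow> bool" where
  "future_timelike d x \<longleftrightarrow> x \<in> carrier_vec d \<and> eta_form d x x > 0 \<and> x $ 0 > 0"

definition past_timelike :: "nat \<Rightarrow> real vec \<Rightarrow> bool" where
  "past_timelike d x \<longleftrightarrow> x \<in> carrier_vec d \<and> eta_form d x x > 0 \<and> x $ 0 < 0"

definition lorentz :: "nat \<Rightarrow> real mat \<Rightarrow> bool" where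
  "lorentz d L \<longleftrightarrow> L \<in> carrier_mat d d \<and> transpose_mat L * eta_mat d * L = eta_mat d"

definition L_plus_down :: "nat \<Rightarrow> real mat set" where
  "L_plus_down d = {L. lorentz d L \<and> det L = 1
      \<and> (\<forall>x. future_timelike d x \<longrightarrow> past_timelike d (L *\<^sub>v x))}"

definition flat_tilde_L_plus_down :: "nat \<Rightarrow> (nat set \<Rightarrow> complex) set" where
  "flat_tilde_L_plus_down d = {g \<in> spin_group d.
      \<exists>L \<in> L_plus_down d. spin_pi d g = map_mat complex_of_real L}"

end

theory Submission
  imports Defs
begin

abbreviation sd :: "'a set \<Rightarrow> 'a set \<Rightarrow> 'a set" where
  "sd A B \<equiv> A - B \<union> (B - A)"

definition invp :: "nat set \<Rightarrow> nat set \<Rightarrow> (nat \<times> nat) set" where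
  "invp A B = {(a, b). a \<in> A \<and> b \<in> B \<and> b < a}"

lemma blade_sign_invp: "blade_sign A B = (-1) ^ card (invp A B) * (\<Prod>c\<in>A \<inter> B. eta_diag c)"
  unfolding blade_sign_def invp_def by simp

lemma invp_finite: "finite X \<Longrightarrow> finite (invp X Z)"
proof -
  assume "finite X"
  have "invp X Z \<subseteq> Sigma X (\<lambda>a. {..<a})" unfolding invp_def by auto
  moreover have "finite (Sigma X (\<lambda>a. {..<a}))" using \<open>finite X\<close> by auto
  ultimately show ?thesis by (rule finite_subset)
qed

lemma card_sd: "finite P \<Longrightarrow> finite Q \<Longrightarrow> card (sd P Q) + 2 * card (P \<inter> Q) = card P + card Q"
proof -
  assume f: "finite P" "finite Q"
  have a: "card (sd P Q) = card (P - Q) + card (Q - P)"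
    by (rule card_Un_disjoint) (use f in auto)
  have b0: "card ((P - Q) \<union> (P \<inter> Q)) = card (P - Q) + card (P \<inter> Q)"
    by (rule card_Un_disjoint) (use f in auto)
  have b1: "(P - Q) \<union> (P \<inter> Q) = P" by blast
  have c0: "card ((Q - P) \<union> (P \<inter> Q)) = card (Q - P) + card (P \<inter> Q)"
    by (rule card_Un_disjoint) (use f in auto)
  have c1: "(Q - P) \<union> (P \<inter> Q) = Q" by blast
  have b: "card P = card (P - Q) + card (P \<inter> Q)" using b0 b1 by simp
  have c: "card Q = card (Q - P) + card (P \<inter> Q)" using c0 c1 by simp
  show ?thesis using a b c by simp
qed

lemma neg1_pow_sd: "finite P \<Longrightarrow> finite Q \<Longrightarrow>
   (-1::complex) ^ card (sd P Q) = (-1) ^ card P * (-1) ^ card Q"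
proof -
  assume f: "finite P" "finite Q"
  have "(-1::complex) ^ card (sd P Q) = (-1) ^ (card (sd P Q) + 2 * card (P \<inter> Q))"
    by (simp add: power_add power_mult)
  also have "\<dots> = (-1) ^ (card P + card Q)" using card_sd[OF f] by simp
  finally show ?thesis by (simp add: power_add)
qed

lemma prod_sd:
  fixes f :: "nat \<Rightarrow> complex"
  assumes sq: "\<And>x. f x * f x = 1" and fP: "finite P" and fQ: "finite Q"
  shows "prod f (sd P Q) = prod f P * prod f Q"
proof -
  have a: "prod f (sd P Q) = prod f (P - Q) * prod f (Q - P)"
    by (rule prod.union_disjoint) (use fP fQ in auto)
  have b0: "prod f ((P - Q) \<union> (P \<inter> Q)) = prod f (P - Q) * prod f (P \<inter> Q)"
    by (rule prod.union_disjoint) (use fP fQ in auto)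
  have b1: "(P - Q) \<union> (P \<inter> Q) = P" by blast
  have c0: "prod f ((Q - P) \<union> (P \<inter> Q)) = prod f (Q - P) * prod f (P \<inter> Q)"
    by (rule prod.union_disjoint) (use fP fQ in auto)
  have c1: "(Q - P) \<union> (P \<inter> Q) = Q" by blast
  have b: "prod f P = prod f (P - Q) * prod f (P \<inter> Q)" using b0 b1 by simp
  have c: "prod f Q = prod f (Q - P) * prod f (P \<inter> Q)" using c0 c1 by simp
  have d: "prod f (P \<inter> Q) * prod f (P \<inter> Q) = 1"
    using sq by (simp add: prod.distrib[symmetric])
  have "prod f P * prod f Q = prod f (P - Q) * prod f (Q - P) * (prod f (P \<inter> Q) * prod f (P \<inter> Q))"
    using b c by (simp add: algebra_simps)
  then show ?thesis using a d by simp
qed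

lemma eta_sq: "eta_diag x * eta_diag x = 1"
  unfolding eta_diag_def by simp

lemma bichar_left:
  assumes "finite X" "finite Y"
  shows "blade_sign (sd X Y) Z = blade_sign X Z * blade_sign Y Z"
proof -
  have i: "invp (sd X Y) Z = sd (invp X Z) (invp Y Z)" unfolding invp_def by auto
  have j: "sd X Y \<inter> Z = sd (X \<inter> Z) (Y \<inter> Z)" by auto
  show ?thesis unfolding blade_sign_invp i j
    using neg1_pow_sd[OF invp_finite[OF assms(1)] invp_finite[OF assms(2)], of Z Z]
      prod_sd[OF eta_sq, of "X \<inter> Z" "Y \<inter> Z"] assms
    by (simp add: algebra_simps)
qed

lemma bichar_right:
  assumes "finite X"
  shows "blade_sign X (sd Y Z) = blade_sign X Y * blade_sign X Z"
proof -
  have i: "invp X (sd Y Z) = sd (invp X Y) (invp X Z)" unfolding invp_def by auto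
  have j: "X \<inter> sd Y Z = sd (X \<inter> Y) (X \<inter> Z)" by auto
  show ?thesis unfolding blade_sign_invp i j
    using neg1_pow_sd[OF invp_finite[OF assms(1)] invp_finite[OF assms(1)], of Y Z]
      prod_sd[OF eta_sq, of "X \<inter> Y" "X \<inter> Z"] assms
    by (simp add: algebra_simps)
qed

lemma cocycle:
  assumes "finite A" "finite B"
  shows "blade_sign (sd A B) E * blade_sign A B = blade_sign A (sd B E) * blade_sign B E"
  using bichar_left[OF assms, of E] bichar_right[OF assms(1), of B E] by (simp add: algebra_simps)

lemma sum_sd_reindex:
  assumes "A \<subseteq> {..<d}"
  shows "(\<Sum>D\<in>Pow {..<d}. f D) = (\<Sum>B\<in>Pow {..<d}. f (sd A B))"
proof -
  have e: "\<And>a. sd A (sd A a) = a" by blast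
  show ?thesis
    by (rule sum.reindex_bij_witness[where i="sd A" and j="sd A"]) (use assms e in auto)
qed

lemma cl_assoc: "cl_mult d (cl_mult d x y) z = cl_mult d x (cl_mult d y z)"
proof (rule ext)
  fix C
  let ?P = "Pow {..<d}"
  have "cl_mult d (cl_mult d x y) z C =
     (\<Sum>D\<in>?P. \<Sum>A\<in>?P. blade_sign D (sd D C) * (blade_sign A (sd A D) * x A * y (sd A D)) * z (sd D C))"
    unfolding cl_mult_def by (simp add: sum_distrib_left sum_distrib_right)
  also have "\<dots> = (\<Sum>A\<in>?P. \<Sum>D\<in>?P. blade_sign D (sd D C) * (blade_sign A (sd A D) * x A * y (sd A D)) * z (sd D C))"
    by (rule sum.swap)
  also have "\<dots> = (\<Sum>A\<in>?P. \<Sum>B\<in>?P. blade_sign (sd A B) (sd (sd A B) C) * (blade_sign A (sd A (sd A B)) * x A * y (sd A (sd A B))) * z (sd (sd A B) C))"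
    by (rule sum.cong[OF refl], rule sum_sd_reindex) auto
  also have "\<dots> = (\<Sum>A\<in>?P. \<Sum>B\<in>?P. blade_sign A (sd A C) * x A * (blade_sign B (sd B (sd A C)) * y B * z (sd B (sd A C))))"
  proof (rule sum.cong[OF refl], rule sum.cong[OF refl])
    fix A B assume A: "A \<in> ?P" and B: "B \<in> ?P"
    have fA: "finite A" using A finite_subset by auto
    have fB: "finite B" using B finite_subset by auto
    have e1: "sd A (sd A B) = B" by auto
    have e2: "sd (sd A B) C = sd B (sd A C)" by auto
    have e3: "sd B (sd B (sd A C)) = sd A C" by auto
    have cc: "blade_sign (sd A B) (sd B (sd A C)) * blade_sign A B = blade_sign A (sd A C) * blade_sign B (sd B (sd A C))"
      using cocycle[OF fA fB, of "sd B (sd A C)"] unfolding e3 .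
    show "blade_sign (sd A B) (sd (sd A B) C) * (blade_sign A (sd A (sd A B)) * x A * y (sd A (sd A B))) * z (sd (sd A B) C) =
          blade_sign A (sd A C) * x A * (blade_sign B (sd B (sd A C)) * y B * z (sd B (sd A C)))"
      unfolding e1 e2 using cc by (simp add: algebra_simps)
  qed
  also have "\<dots> = cl_mult d x (cl_mult d y z) C"
    unfolding cl_mult_def by (simp add: sum_distrib_left)
  finally show "cl_mult d (cl_mult d x y) z C = cl_mult d x (cl_mult d y z) C" .
qed


definition sc :: "complex \<Rightarrow> (nat set \<Rightarrow> complex) \<Rightarrow> (nat set \<Rightarrow> complex)" where
  "sc c x = (\<lambda>A. c * x A)"

lemma cl_elem_mult: "cl_elem d y \<Longrightarrow> cl_elem d (cl_mult d x y)"
  unfolding cl_elem_def cl_mult_def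
proof (intro allI impI)
  fix C assume y: "\<forall>A. \<not> A \<subseteq> {..<d} \<longrightarrow> y A = 0" and C: "\<not> C \<subseteq> {..<d}"
  show "(\<Sum>A\<in>Pow {..<d}. blade_sign A (sd A C) * x A * y (sd A C)) = 0"
  proof (rule sum.neutral, rule ballI)
    fix A assume "A \<in> Pow {..<d}"
    then have "\<not> sd A C \<subseteq> {..<d}" using C by blast
    then show "blade_sign A (sd A C) * x A * y (sd A C) = 0" using y by simp
  qed
qed

lemma blade_sign_empty_left[simp]: "blade_sign {} C = 1"
  unfolding blade_sign_def by simp

lemma blade_sign_empty_right[simp]: "blade_sign C {} = 1"
  unfolding blade_sign_def by simp

lemma mult_one_right: "cl_elem d x \<Longrightarrow> cl_mult d x cl_one = x"
proof (rule ext)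
  fix C assume x: "cl_elem d x"
  have "cl_mult d x cl_one C = (\<Sum>A\<in>Pow {..<d}. if A = C then x C else 0)"
    unfolding cl_mult_def cl_one_def
    by (rule sum.cong[OF refl]) auto
  also have "\<dots> = x C" using x unfolding cl_elem_def by (simp add: sum.delta')
  finally show "cl_mult d x cl_one C = x C" .
qed

lemma mult_one_left: "cl_mult d cl_one x = x"
proof (rule ext)
  fix C
  have "cl_mult d cl_one x C = (\<Sum>A\<in>Pow {..<d}. if A = {} then x C else 0)"
    unfolding cl_mult_def cl_one_def
    by (rule sum.cong[OF refl]) auto
  also have "\<dots> = x C" by (simp add: sum.delta')
  finally show "cl_mult d cl_one x C = x C" .
qed

lemma mult_sc_right: "cl_mult d x (sc c y) = sc c (cl_mult d x y)"
  unfolding cl_mult_def sc_def by (rule ext) (simp add: sum_distrib_left algebra_simps)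

lemma mult_sc_left: "cl_mult d (sc c x) y = sc c (cl_mult d x y)"
  unfolding cl_mult_def sc_def by (rule ext) (simp add: sum_distrib_left algebra_simps)

lemma rev_sc: "cl_rev (sc c x) = sc c (cl_rev x)"
  unfolding cl_rev_def sc_def by (rule ext) (simp add: algebra_simps)

lemma cnj_eta[simp]: "cnj (eta_diag c) = eta_diag c"
  unfolding eta_diag_def by simp

lemma cnj_blade_sign[simp]: "cnj (blade_sign A B) = blade_sign A B"
  unfolding blade_sign_def by simp

lemma conj_mult: "spin_conj (cl_mult d x y) = cl_mult d (spin_conj x) (spin_conj y)"
  unfolding spin_conj_def cl_mult_def by (rule ext) simp

lemma conj_rev: "spin_conj (cl_rev x) = cl_rev (spin_conj x)"
  unfolding spin_conj_def cl_rev_def by (rule ext) simp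

lemma conj_one: "spin_conj cl_one = cl_one"
  unfolding spin_conj_def cl_one_def by (rule ext) simp

lemma conj_basis: "spin_conj (cl_basis d j) = cl_basis d j"
  unfolding spin_conj_def cl_basis_def cl_vec_def by (rule ext) simp

lemma conj_elem: "cl_elem d x \<Longrightarrow> cl_elem d (spin_conj x)"
  unfolding spin_conj_def cl_elem_def by simp

lemma rev_elem: "cl_elem d x \<Longrightarrow> cl_elem d (cl_rev x)"
  unfolding cl_rev_def cl_elem_def by simp

lemma conj_even: "cl_even x \<Longrightarrow> cl_even (spin_conj x)"
  unfolding spin_conj_def cl_even_def by simp

lemma rev_even: "cl_even x \<Longrightarrow> cl_even (cl_rev x)"
  unfolding cl_rev_def cl_even_def by simp

lemma basis_elem: "cl_elem d (cl_basis d j)"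
  unfolding cl_basis_def cl_vec_def cl_elem_def by auto

lemma mult_even:
  assumes "cl_even x" "cl_even y"
  shows "cl_even (cl_mult d x y)"
  unfolding cl_even_def
proof (intro allI impI)
  fix C :: "nat set" assume C: "odd (card C)"
  show "cl_mult d x y C = 0"
    unfolding cl_mult_def
  proof (rule sum.neutral, rule ballI)
    fix A assume A: "A \<in> Pow {..<d}"
    have fA: "finite A" using A finite_subset by auto
    show "blade_sign A (sd A C) * x A * y (sd A C) = 0"
    proof (cases "finite C")
      case True
      have "card (sd A C) + 2 * card (A \<inter> C) = card A + card C" by (rule card_sd[OF fA True])
      then have "odd (card A) \<or> odd (card (sd A C))" using C by presburger
      then show ?thesis using assms unfolding cl_even_def by auto
    next
      case False
      then show ?thesis using C by simp
    qed
  qed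
qed

lemma basis_eq: "j < d \<Longrightarrow> cl_basis d j S = (if S = {j} then 1 else 0)"
  unfolding cl_basis_def cl_vec_def by auto

lemma sd_single_iff: "(sd A C = {j}) = (A = sd C {j})"
proof
  assume "sd A C = {j}" then show "A = sd C {j}" by blast
next
  assume "A = sd C {j}" then show "sd A C = {j}" by blast
qed

lemma mult_basis_right:
  assumes j: "j < d" and C: "C \<subseteq> {..<d}"
  shows "cl_mult d h (cl_basis d j) C = blade_sign (sd C {j}) {j} * h (sd C {j})"
proof -
  have "cl_mult d h (cl_basis d j) C = (\<Sum>A\<in>Pow {..<d}. if A = sd C {j} then blade_sign A {j} * h A else 0)"
    unfolding cl_mult_def
  proof (rule sum.cong[OF refl])
    fix A assume "A \<in> Pow {..<d}"
    show "blade_sign A (sd A C) * h A * cl_basis d j (sd A C) = (if A = sd C {j} then blade_sign A {j} * h A else 0)"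
    proof (cases "A = sd C {j}")
      case True
      then have "sd A C = {j}" by blast
      then show ?thesis using True j by (simp add: basis_eq)
    next
      case False
      then show ?thesis using j by (simp add: basis_eq sd_single_iff)
    qed
  qed
  also have "\<dots> = blade_sign (sd C {j}) {j} * h (sd C {j})"
  proof -
    have "sd C {j} \<subseteq> {..<d}" using j C by auto
    then show ?thesis by (simp add: sum.delta')
  qed
  finally show ?thesis .
qed

lemma mult_basis_left:
  assumes j: "j < d" and C: "C \<subseteq> {..<d}"
  shows "cl_mult d (cl_basis d j) h C = blade_sign {j} (sd {j} C) * h (sd {j} C)"
proof -
  have "cl_mult d (cl_basis d j) h C = (\<Sum>A\<in>Pow {..<d}. if A = {j} then blade_sign {j} (sd {j} C) * h (sd {j} C) else 0)"
    unfolding cl_mult_def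
    by (rule sum.cong[OF refl]) (use j in \<open>simp add: basis_eq\<close>)
  also have "\<dots> = blade_sign {j} (sd {j} C) * h (sd {j} C)"
    using j by (simp add: sum.delta')
  finally show ?thesis .
qed


lemma card_split_single:
  fixes j :: nat
  assumes fB: "finite B" and jB: "j \<in> B"
  shows "card {a\<in>B. j < a} + card {b\<in>B. b < j} + 1 = card B"
proof -
  have e: "B = ({a\<in>B. j < a} \<union> {b\<in>B. b < j}) \<union> {j}" using jB by (auto; metis nat_neq_iff)
  have "card (({a\<in>B. j < a} \<union> {b\<in>B. b < j}) \<union> {j}) = card ({a\<in>B. j < a} \<union> {b\<in>B. b < j}) + card {j}"
    by (rule card_Un_disjoint) (use fB in auto)
  moreover have "card ({a\<in>B. j < a} \<union> {b\<in>B. b < j}) = card {a\<in>B. j < a} + card {b\<in>B. b < j}"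
    by (rule card_Un_disjoint) (use fB in auto)
  ultimately show ?thesis using e by simp
qed

lemma sign_swap_single:
  assumes fB: "finite B" and jB: "j \<in> B" and ev: "even (card B)"
  shows "blade_sign B {j} = - blade_sign {j} B"
proof -
  have i1: "invp B {j} = (\<lambda>a. (a, j)) ` {a\<in>B. j < a}" unfolding invp_def by auto
  have i2: "invp {j} B = (\<lambda>b. (j, b)) ` {b\<in>B. b < j}" unfolding invp_def by auto
  have c1: "card (invp B {j}) = card {a\<in>B. j < a}" unfolding i1 by (rule card_image) (auto simp: inj_on_def)
  have c2: "card (invp {j} B) = card {b\<in>B. b < j}" unfolding i2 by (rule card_image) (auto simp: inj_on_def)
  have s: "card {a\<in>B. j < a} + card {b\<in>B. b < j} + 1 = card B" by (rule card_split_single[OF fB jB])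
  define m where "m = card {a\<in>B. j < a}"
  define n where "n = card {b\<in>B. b < j}"
  have p: "(-1::complex) ^ m = - ((-1) ^ n)"
  proof -
    have "odd (m + n)" using s ev unfolding m_def n_def by presburger
    then have "(-1::complex) ^ (m + n) = -1" by simp
    then have "(-1::complex) ^ m * (-1) ^ n = -1" by (simp add: power_add)
    then have "(-1::complex) ^ m * (-1) ^ n * (-1) ^ n = - ((-1) ^ n)" by simp
    moreover have "(-1::complex) ^ n * (-1) ^ n = 1"
      by (simp add: power_add[symmetric])
    ultimately show ?thesis by (simp add: mult.assoc)
  qed
  have q: "B \<inter> {j} = {j} \<inter> B" by auto
  show ?thesis unfolding blade_sign_invp c1 c2 q m_def[symmetric] n_def[symmetric] p by simp
qed

lemma blade_sign_nonzero: "blade_sign A B \<noteq> 0"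
proof -
  have "(\<Prod>i\<in>A \<inter> B. eta_diag i) \<noteq> 0"
    by (cases "finite (A \<inter> B)") (auto simp: eta_diag_def prod_zero_iff)
  then show ?thesis unfolding blade_sign_def by simp
qed

lemma central_scalar:
  assumes el: "cl_elem d h" and ev: "cl_even h"
    and comm: "\<And>j. j < d \<Longrightarrow> cl_mult d h (cl_basis d j) = cl_mult d (cl_basis d j) h"
  shows "h = sc (h {}) cl_one"
proof (rule ext)
  fix B
  show "h B = sc (h {}) cl_one B"
  proof (cases "B = {}")
    case True then show ?thesis unfolding sc_def cl_one_def by simp
  next
    case ne: False
    have "h B = 0"
    proof (cases "B \<subseteq> {..<d}")
      case False then show ?thesis using el unfolding cl_elem_def by simp
    next
      case sub: True
      have fB: "finite B" using sub finite_subset by auto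
      show ?thesis
      proof (cases "odd (card B)")
        case True then show ?thesis using ev unfolding cl_even_def by simp
      next
        case False
        obtain j where jB: "j \<in> B" using ne by auto
        have jd: "j < d" using jB sub by auto
        let ?C = "sd B {j}"
        have Cd: "?C \<subseteq> {..<d}" using sub jd by auto
        have e1: "sd ?C {j} = B" by blast
        have e2: "sd {j} ?C = B" by blast
        have "cl_mult d h (cl_basis d j) ?C = cl_mult d (cl_basis d j) h ?C" using comm[OF jd] by simp
        then have "blade_sign B {j} * h B = blade_sign {j} B * h B"
          unfolding mult_basis_right[OF jd Cd] mult_basis_left[OF jd Cd] e1 e2 .
        also have "blade_sign {j} B = - blade_sign B {j}"
          using sign_swap_single[OF fB jB] False by simp
        finally have "blade_sign B {j} * h B = - (blade_sign B {j} * h B)" by simp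
        then have "blade_sign B {j} * h B = 0" by auto
        then show ?thesis using blade_sign_nonzero[of B "{j}"] by auto
      qed
    qed
    then show ?thesis using ne unfolding sc_def cl_one_def by simp
  qed
qed

lemma card_invp_diag:
  assumes fB: "finite B"
  shows "card (invp B B) = card B * (card B - 1) div 2"
proof -
  let ?Q = "{(a, b). a \<in> B \<and> b \<in> B \<and> a < b}"
  let ?D = "(\<lambda>a. (a, a)) ` B"
  have fI: "finite (invp B B)" by (rule invp_finite[OF fB])
  have eQ: "?Q = prod.swap ` invp B B" unfolding invp_def by auto
  have cQ: "card ?Q = card (invp B B)" unfolding eQ by (rule card_image) simp
  have cD: "card ?D = card B" by (rule card_image) (auto simp: inj_on_def)
  have fQ: "finite ?Q" using eQ fI by simp
  have U: "B \<times> B = (invp B B \<union> ?Q) \<union> ?D" unfolding invp_def by auto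
  have "card ((invp B B \<union> ?Q) \<union> ?D) = card (invp B B \<union> ?Q) + card ?D"
    by (rule card_Un_disjoint) (use fI fQ fB in \<open>auto simp: invp_def\<close>)
  moreover have "card (invp B B \<union> ?Q) = card (invp B B) + card ?Q"
    by (rule card_Un_disjoint) (use fI fQ in \<open>auto simp: invp_def\<close>)
  moreover have "card (B \<times> B) = card ((invp B B \<union> ?Q) \<union> ?D)"
    by (rule arg_cong[where f=card, OF U])
  ultimately have "card B * card B = 2 * card (invp B B) + card B"
    using cQ cD by (simp add: card_cartesian_product)
  then have "card B * (card B - 1) = 2 * card (invp B B)"
    by (simp add: diff_mult_distrib2)
  then show ?thesis by simp
qed

lemma prod_eta: "finite B \<Longrightarrow> (\<Prod>c\<in>B. eta_diag c) = (-1) ^ card (B - {0})"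
proof -
  assume fB: "finite B"
  have a: "(\<Prod>c\<in>B - {0}. eta_diag c) = (\<Prod>c\<in>B - {0}. -1)"
    by (rule prod.cong) (auto simp: eta_diag_def)
  show ?thesis
  proof (cases "0 \<in> B")
    case True
    have "(\<Prod>c\<in>B. eta_diag c) = eta_diag 0 * (\<Prod>c\<in>B - {0}. eta_diag c)"
      using True fB by (simp add: prod.remove)
    then show ?thesis using a by (simp add: eta_diag_def)
  next
    case False
    then have "B - {0} = B" by auto
    then show ?thesis using a by simp
  qed
qed

lemma sign_pi00:
  assumes fA: "finite A"
  shows "blade_sign A (sd A {0}) * blade_sign (sd A {0}) {0}
     * (-1) ^ (card (sd A {0}) * (card (sd A {0}) - 1) div 2) = (1::complex)"
proof -
  define B where "B = sd A {0}"
  have fB: "finite B" unfolding B_def using fA by simp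
  have AB: "A = sd B {0}" unfolding B_def by blast
  have s1: "blade_sign (sd B {0}) B = blade_sign B B * blade_sign {0} B"
    by (rule bichar_left) (use fB in auto)
  have s2: "blade_sign {0} B = 1"
  proof -
    have "invp {0} B = {}" unfolding invp_def by auto
    moreover have "(\<Prod>c\<in>{0} \<inter> B. eta_diag c) = 1"
      by (cases "0 \<in> B") (auto simp: eta_diag_def)
    ultimately show ?thesis unfolding blade_sign_invp by simp
  qed
  have s3: "blade_sign B {0} = (-1) ^ card (B - {0})"
  proof -
    have "invp B {0} = (\<lambda>a. (a, 0)) ` (B - {0})" unfolding invp_def by auto
    then have "card (invp B {0}) = card (B - {0})" by (simp add: card_image inj_on_def)
    moreover have "(\<Prod>c\<in>B \<inter> {0}. eta_diag c) = 1"
      by (cases "0 \<in> B") (auto simp: eta_diag_def Int_insert_right)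
    ultimately show ?thesis unfolding blade_sign_invp by simp
  qed
  have s4: "blade_sign B B = (-1) ^ (card B * (card B - 1) div 2) * (-1) ^ card (B - {0})"
    unfolding blade_sign_invp card_invp_diag[OF fB] using prod_eta[OF fB] by simp
  have sq: "\<And>n. (-1::complex) ^ n * (-1) ^ n = 1" by (simp add: power_add[symmetric])
  have "blade_sign A (sd A {0}) * blade_sign (sd A {0}) {0}
     * (-1) ^ (card (sd A {0}) * (card (sd A {0}) - 1) div 2)
     = ((-1) ^ (card B * (card B - 1) div 2) * (-1) ^ (card B * (card B - 1) div 2))
       * ((-1) ^ card (B - {0}) * (-1) ^ card (B - {0}))"
    unfolding B_def[symmetric] AB[symmetric] using s1 s2 s3 s4 unfolding AB[symmetric]
    by (simp add: algebra_simps)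
  also have "\<dots> = 1" using sq by simp
  finally show ?thesis .
qed


lemma cl_mult_apply: "cl_mult d x y C = (\<Sum>A\<in>Pow {..<d}. blade_sign A (sd A C) * x A * y (sd A C))"
  by (simp add: cl_mult_def)

lemma pi00:
  assumes d0: "0 < d"
  shows "spin_pi d g $$ (0, 0) = (\<Sum>A\<in>Pow {..<d}. g (sd A {0}) ^ 2)"
proof -
  have "spin_pi d g $$ (0, 0) = cl_mult d (cl_mult d g (cl_basis d 0)) (cl_rev g) {0}"
    unfolding spin_pi_def using d0 by simp
  also have "\<dots> = (\<Sum>A\<in>Pow {..<d}. blade_sign A (sd A {0}) * cl_mult d g (cl_basis d 0) A * cl_rev g (sd A {0}))"
    by (rule cl_mult_apply)
  also have "\<dots> = (\<Sum>A\<in>Pow {..<d}. g (sd A {0}) ^ 2)"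
  proof (rule sum.cong[OF refl])
    fix A assume A: "A \<in> Pow {..<d}"
    have fA: "finite A" using A finite_subset by auto
    have m: "cl_mult d g (cl_basis d 0) A = blade_sign (sd A {0}) {0} * g (sd A {0})"
      using mult_basis_right[OF d0, of A g] A by simp
    have r: "cl_rev g (sd A {0}) = (-1) ^ (card (sd A {0}) * (card (sd A {0}) - 1) div 2) * g (sd A {0})"
      unfolding cl_rev_def ..
    show "blade_sign A (sd A {0}) * cl_mult d g (cl_basis d 0) A * cl_rev g (sd A {0}) = g (sd A {0}) ^ 2"
      unfolding m r using sign_pi00[OF fA] by (simp add: algebra_simps power2_eq_square)
  qed
  finally show ?thesis .
qed

lemma L00:
  assumes L: "L \<in> L_plus_down d" and d0: "0 < d"
  shows "L $$ (0, 0) < 0"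
proof -
  have Lc: "L \<in> carrier_mat d d" using L unfolding L_plus_down_def lorentz_def by auto
  have ft: "\<And>x. future_timelike d x \<Longrightarrow> past_timelike d (L *\<^sub>v x)"
    using L unfolding L_plus_down_def by auto
  let ?e = "unit_vec d 0 :: real vec"
  have em: "eta_mat d \<in> carrier_mat d d" unfolding eta_mat_def by simp
  have ee: "eta_form d ?e ?e = 1"
  proof -
    have "eta_form d ?e ?e = (eta_mat d *\<^sub>v ?e) $ 0"
      unfolding eta_form_def by (rule scalar_prod_left_unit) (use em d0 in auto)
    also have "\<dots> = 1" using em d0 by (simp add: eta_mat_def)
    finally show ?thesis .
  qed
  have "future_timelike d ?e" unfolding future_timelike_def using ee d0 by simp
  then have "past_timelike d (L *\<^sub>v ?e)" by (rule ft)
  then have "(L *\<^sub>v ?e) $ 0 < 0" unfolding past_timelike_def by simp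
  moreover have "(L *\<^sub>v ?e) $ 0 = L $$ (0, 0)" using Lc d0 by simp
  ultimately show ?thesis by simp
qed

theorem mainTheorem9:
  fixes d :: nat and g :: "nat set \<Rightarrow> complex"
  assumes "d \<ge> 3"
    and "g \<in> flat_tilde_L_plus_down d"
  shows "spin_conj g = cl_mult d g spin_tau"
proof -
  have d0: "0 < d" using assms(1) by simp
  from assms(2) obtain L where gs: "g \<in> spin_group d" and L: "L \<in> L_plus_down d"
    and pg: "spin_pi d g = map_mat complex_of_real L"
    unfolding flat_tilde_L_plus_down_def by auto
  have eg: "cl_elem d g" and evg: "cl_even g" and g1: "cl_mult d g (cl_rev g) = cl_one"
    and g2: "cl_mult d (cl_rev g) g = cl_one"
    and gv: "\<And>v. \<exists>w. cl_mult d (cl_mult d g (cl_vec d v)) (cl_rev g) = cl_vec d w"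
    using gs unfolding spin_group_def by auto
  define c where "c = spin_conj g"
  have ec: "cl_elem d c" unfolding c_def using eg by (rule conj_elem)
  have evc: "cl_even c" unfolding c_def using evg by (rule conj_even)
  have c1: "cl_mult d c (cl_rev c) = cl_one"
    unfolding c_def conj_rev[symmetric] conj_mult[symmetric] g1 conj_one ..
  have c2: "cl_mult d (cl_rev c) c = cl_one"
    unfolding c_def conj_rev[symmetric] conj_mult[symmetric] g2 conj_one ..
  have dimL: "dim_row L = d" "dim_col L = d"
  proof -
    have "dim_row (spin_pi d g) = d" "dim_col (spin_pi d g) = d" unfolding spin_pi_def by simp_all
    then show "dim_row L = d" "dim_col L = d" unfolding pg by simp_all
  qed
  have X: "cl_mult d (cl_mult d c (cl_basis d j)) (cl_rev c) = cl_mult d (cl_mult d g (cl_basis d j)) (cl_rev g)"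
    if j: "j < d" for j
  proof -
    obtain w where w: "cl_mult d (cl_mult d g (cl_basis d j)) (cl_rev g) = cl_vec d w"
      using gv[of "\<lambda>i. if i = j then 1 else 0"] unfolding cl_basis_def by auto
    have wr: "cnj (w i) = w i" if i: "i < d" for i
    proof -
      have "w i = cl_vec d w {i}" unfolding cl_vec_def using i by auto
      also have "\<dots> = spin_pi d g $$ (i, j)" unfolding spin_pi_def w[symmetric] using i j by simp
      also have "\<dots> = complex_of_real (L $$ (i, j))" unfolding pg using i j dimL by simp
      finally show "cnj (w i) = w i" by simp
    qed
    have cv: "spin_conj (cl_vec d w) = cl_vec d w"
    proof (rule ext)
      fix A show "spin_conj (cl_vec d w) A = cl_vec d w A"
        unfolding spin_conj_def cl_vec_def using wr by auto
    qed
    have "cl_mult d (cl_mult d c (cl_basis d j)) (cl_rev c) = spin_conj (cl_mult d (cl_mult d g (cl_basis d j)) (cl_rev g))"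
      unfolding c_def conj_mult conj_rev conj_basis ..
    also have "\<dots> = cl_vec d w" using w cv by simp
    finally show ?thesis using w by simp
  qed
  define h where "h = cl_mult d (cl_rev c) g"
  have eh: "cl_elem d h" unfolding h_def using eg by (rule cl_elem_mult)
  have evh: "cl_even h" unfolding h_def by (rule mult_even[OF rev_even[OF evc] evg])
  have comm: "cl_mult d h (cl_basis d j) = cl_mult d (cl_basis d j) h" if j: "j < d" for j
  proof -
    let ?e = "cl_basis d j"
    have ege: "cl_elem d (cl_mult d g ?e)" by (rule cl_elem_mult[OF basis_elem])
    have "cl_mult d g ?e = cl_mult d (cl_mult d g ?e) cl_one" using mult_one_right[OF ege] by simp
    also have "\<dots> = cl_mult d (cl_mult d g ?e) (cl_mult d (cl_rev g) g)" using g2 by simp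
    also have "\<dots> = cl_mult d (cl_mult d (cl_mult d g ?e) (cl_rev g)) g" by (simp add: cl_assoc)
    also have "\<dots> = cl_mult d (cl_mult d (cl_mult d c ?e) (cl_rev c)) g" using X[OF j] by simp
    also have "\<dots> = cl_mult d (cl_mult d c ?e) h" unfolding h_def by (simp add: cl_assoc)
    finally have ge: "cl_mult d g ?e = cl_mult d (cl_mult d c ?e) h" .
    have "cl_mult d h ?e = cl_mult d (cl_rev c) (cl_mult d g ?e)" unfolding h_def by (simp add: cl_assoc)
    also have "\<dots> = cl_mult d (cl_rev c) (cl_mult d (cl_mult d c ?e) h)" using ge by simp
    also have "\<dots> = cl_mult d (cl_mult d (cl_mult d (cl_rev c) c) ?e) h" by (simp add: cl_assoc)
    also have "\<dots> = cl_mult d ?e h" using c2 by (simp add: mult_one_left)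
    finally show ?thesis .
  qed
  have hs: "h = sc (h {}) cl_one" by (rule central_scalar[OF eh evh comm])
  define lam where "lam = h {}"
  have gch: "cl_mult d c h = g"
  proof -
    have "cl_mult d c h = cl_mult d (cl_mult d c (cl_rev c)) g" unfolding h_def by (simp add: cl_assoc)
    also have "\<dots> = g" using c1 by (simp add: mult_one_left)
    finally show ?thesis .
  qed
  have gl: "g = sc lam c"
  proof -
    have "g = cl_mult d c (sc lam cl_one)" using gch hs unfolding lam_def by simp
    also have "\<dots> = sc lam c" by (simp add: mult_sc_right mult_one_right[OF ec])
    finally show ?thesis .
  qed
  have lam2: "lam * lam = 1"
  proof -
    have "cl_one = cl_mult d (sc lam c) (cl_rev (sc lam c))" using g1 gl by simp
    also have "\<dots> = sc lam (sc lam (cl_mult d c (cl_rev c)))" by (simp add: rev_sc mult_sc_left mult_sc_right)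
    also have "\<dots> = sc lam (sc lam cl_one)" using c1 by simp
    finally have "cl_one {} = sc lam (sc lam cl_one) {}" by simp
    then show ?thesis by (simp add: sc_def cl_one_def)
  qed
  then have "lam = 1 \<or> lam = -1" by (simp add: square_eq_1_iff)
  then show ?thesis
  proof
    assume l1: "lam = 1"
    have gcnj: "g A = cnj (g A)" for A using fun_cong[OF gl, of A] l1 unfolding sc_def c_def spin_conj_def by simp
    have gsq: "g A ^ 2 = complex_of_real ((Re (g A)) ^ 2)" for A
    proof -
      have "g A = complex_of_real (Re (g A))" using gcnj[of A] by (simp add: complex_eq_iff)
      then show ?thesis by (metis of_real_power)
    qed
    have "complex_of_real (L $$ (0, 0)) = spin_pi d g $$ (0, 0)" unfolding pg using d0 dimL by simp
    also have "\<dots> = (\<Sum>A\<in>Pow {..<d}. g (sd A {0}) ^ 2)" by (rule pi00[OF d0])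
    also have "\<dots> = complex_of_real (\<Sum>A\<in>Pow {..<d}. (Re (g (sd A {0}))) ^ 2)"
      by (simp only: gsq of_real_sum)
    finally have "L $$ (0, 0) = (\<Sum>A\<in>Pow {..<d}. (Re (g (sd A {0}))) ^ 2)" by (simp only: of_real_eq_iff)
    then have "L $$ (0, 0) \<ge> 0" by (simp add: sum_nonneg)
    with L00[OF L d0] show ?thesis by simp
  next
    assume lm: "lam = -1"
    have tau: "spin_tau = sc (-1) cl_one" by (rule ext) (simp add: spin_tau_def sc_def cl_one_def)
    show ?thesis
    proof (rule ext)
      fix A
      have "g A = - cnj (g A)" using fun_cong[OF gl, of A] lm unfolding sc_def c_def spin_conj_def by simp
      then have "spin_conj g A = - g A" unfolding spin_conj_def by (metis complex_cnj_cnj complex_cnj_minus)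
      also have "\<dots> = cl_mult d g spin_tau A"
        unfolding tau mult_sc_right mult_one_right[OF eg] by (simp add: sc_def)
      finally show "spin_conj g A = cl_mult d g spin_tau A" .
    qed
  qed
qed

end
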